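(* Let $H$ be a Hopf algebra with antipode $S$, projective as a $k$-module, $A$ a left $H$-comodule algebra, and $\varphi:H\to A$ a left $H$-colinear map. Define $\gamma^\varphi:H\to\mathrm{Hom}(H,A)$ by $\gamma^\varphi(h)(l)=\varphi(hS(l))$. Then $\gamma^\varphi$ is an $A$-integral for the Doi-Hopf datum $(H,A,H)$ if and only if $\rho_A(\varphi(H))\subseteq Z(H\otimes A)$, the center of the tensor product algebra $H\otimes A$. Moreover, $\varphi(1_H)=1_A$ if and only if $\gamma^\varphi$ satisfies the normalization $\sum\gamma^\varphi(h_{(1)})(h_{(2)})=\varepsilon(h)1_A$ for all $h\in H$.
   Context: $k$ commutative ring; Sweedler notation $\Delta(h)=\sum h_{(1)}\otimes h_{(2)}$, $\rho_A(a)=\sum a_{<-1>}\otimes a_{<0>}$. $A$ is a left $H$-comodule algebra (coaction $\rho_A$ an algebra map). The Doi-Hopf datum $(H,A,H)$ uses $C=H$ with right $H$-action by multiplication. An $A$-integral for it is a $k$-linear $\gamma:H\to\mathrm{Hom}(H,A)$ such that for all $a\in A$, $c,d\in H$: (i) $\sum a_{<0>}\gamma(ca_{<-2>})(da_{<-1>})=\gamma(c)(d)\,a$; (ii) $\sum c_{(1)}\otimes\gamma(c_{(2)})(d)=\sum d_{(2)}\gamma(c)(d_{(1)})_{<-1>}\otimes\gamma(c)(d_{(1)})_{<0>}$. *)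

theory Defs
  imports Complex_Main
begin

text \<open>An element of X (x)_k Y is represented by a list of pairs [(x1,y1),...,(xn,yn)],
  standing for the sum of pure tensors x1(x)y1 + ... + xn(x)yn (every element of the
  tensor product has this form, scalars being absorbed into the factors).
  Two lists represent the same element iff their formal difference in the free
  k-module on X x Y lies in the k-submodule generated by the bilinearity relations,
  i.e. this is literally the standard construction of the tensor product.\<close>

definition dl :: "'p \<Rightarrow> 'p \<Rightarrow> 'k::comm_ring_1" where
  "dl q p = (if p = q then 1 else 0)"

inductive_set tzero2 ::
  "('k::comm_ring_1 \<Rightarrow> 'x::ab_group_add \<Rightarrow> 'x) \<Rightarrow> ('k \<Rightarrow> 'y::ab_group_add \<Rightarrow> 'y)
   \<Rightarrow> ('x \<times> 'y \<Rightarrow> 'k) set"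
  for sx sy where
  z: "(\<lambda>p. 0) \<in> tzero2 sx sy"
| add: "u \<in> tzero2 sx sy \<Longrightarrow> v \<in> tzero2 sx sy \<Longrightarrow> (\<lambda>p. u p + v p) \<in> tzero2 sx sy"
| smult: "u \<in> tzero2 sx sy \<Longrightarrow> (\<lambda>p. c * u p) \<in> tzero2 sx sy"
| addL: "(\<lambda>p. dl (x + x', y) p - dl (x, y) p - dl (x', y) p) \<in> tzero2 sx sy"
| addR: "(\<lambda>p. dl (x, y + y') p - dl (x, y) p - dl (x, y') p) \<in> tzero2 sx sy"
| scL: "(\<lambda>p. dl (sx c x, y) p - c * dl (x, y) p) \<in> tzero2 sx sy"
| scR: "(\<lambda>p. dl (x, sy c y) p - c * dl (x, y) p) \<in> tzero2 sx sy"

inductive_set tzero3 ::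
  "('k::comm_ring_1 \<Rightarrow> 'x::ab_group_add \<Rightarrow> 'x) \<Rightarrow> ('k \<Rightarrow> 'y::ab_group_add \<Rightarrow> 'y)
   \<Rightarrow> ('k \<Rightarrow> 'z::ab_group_add \<Rightarrow> 'z) \<Rightarrow> ('x \<times> 'y \<times> 'z \<Rightarrow> 'k) set"
  for sx sy sz where
  z: "(\<lambda>p. 0) \<in> tzero3 sx sy sz"
| add: "u \<in> tzero3 sx sy sz \<Longrightarrow> v \<in> tzero3 sx sy sz \<Longrightarrow> (\<lambda>p. u p + v p) \<in> tzero3 sx sy sz"
| smult: "u \<in> tzero3 sx sy sz \<Longrightarrow> (\<lambda>p. c * u p) \<in> tzero3 sx sy sz"
| add1: "(\<lambda>p. dl (x + x', y, w) p - dl (x, y, w) p - dl (x', y, w) p) \<in> tzero3 sx sy sz"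
| add2: "(\<lambda>p. dl (x, y + y', w) p - dl (x, y, w) p - dl (x, y', w) p) \<in> tzero3 sx sy sz"
| add3: "(\<lambda>p. dl (x, y, w + w') p - dl (x, y, w) p - dl (x, y, w') p) \<in> tzero3 sx sy sz"
| sc1: "(\<lambda>p. dl (sx c x, y, w) p - c * dl (x, y, w) p) \<in> tzero3 sx sy sz"
| sc2: "(\<lambda>p. dl (x, sy c y, w) p - c * dl (x, y, w) p) \<in> tzero3 sx sy sz"
| sc3: "(\<lambda>p. dl (x, y, sz c w) p - c * dl (x, y, w) p) \<in> tzero3 sx sy sz"

text \<open>Formal sum (element of the free k-module) of a list of generators.\<close>
definition fsum :: "'p list \<Rightarrow> 'p \<Rightarrow> 'k::comm_ring_1" where
  "fsum xs p = of_nat (count_list xs p)"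

text \<open>Equality in X (x)_k Y, resp. X (x)_k Y (x)_k Z, of the represented elements.\<close>
definition teq2 ::
  "('k::comm_ring_1 \<Rightarrow> 'x::ab_group_add \<Rightarrow> 'x) \<Rightarrow> ('k \<Rightarrow> 'y::ab_group_add \<Rightarrow> 'y)
   \<Rightarrow> ('x \<times> 'y) list \<Rightarrow> ('x \<times> 'y) list \<Rightarrow> bool" where
  "teq2 sx sy xs ys \<longleftrightarrow> (\<lambda>p. fsum xs p - fsum ys p) \<in> tzero2 sx sy"

definition teq3 ::
  "('k::comm_ring_1 \<Rightarrow> 'x::ab_group_add \<Rightarrow> 'x) \<Rightarrow> ('k \<Rightarrow> 'y::ab_group_add \<Rightarrow> 'y)
   \<Rightarrow> ('k \<Rightarrow> 'z::ab_group_add \<Rightarrow> 'z)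
   \<Rightarrow> ('x \<times> 'y \<times> 'z) list \<Rightarrow> ('x \<times> 'y \<times> 'z) list \<Rightarrow> bool" where
  "teq3 sx sy sz xs ys \<longleftrightarrow> (\<lambda>p. fsum xs p - fsum ys p) \<in> tzero3 sx sy sz"

text \<open>Multiplication in the tensor product algebra X (x) Y (on representatives).\<close>
definition tmul2 :: "('x::times \<times> 'y::times) list \<Rightarrow> ('x \<times> 'y) list \<Rightarrow> ('x \<times> 'y) list" where
  "tmul2 t u = [(x * x', y * y'). (x, y) \<leftarrow> t, (x', y') \<leftarrow> u]"

definition k_algebra :: "('k::comm_ring_1 \<Rightarrow> 'b::ring_1 \<Rightarrow> 'b) \<Rightarrow> bool" where
  "k_algebra s \<longleftrightarrow> module s \<and>
     (\<forall>c x y. s c (x * y) = s c x * y \<and> s c (x * y) = x * s c y)"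

text \<open>Projective k-module: the canonical surjection from the free module k^(M) onto M
  splits, i.e. there are linear coordinate functionals f x (x in M) with finite support
  and y = sum_x f x y *s x  (dual basis lemma).\<close>
definition projective_module :: "('k::comm_ring_1 \<Rightarrow> 'b::ab_group_add \<Rightarrow> 'b) \<Rightarrow> bool" where
  "projective_module s \<longleftrightarrow> module s \<and>
     (\<exists>f :: 'b \<Rightarrow> 'b \<Rightarrow> 'k. (\<forall>x. module_hom s (*) (f x)) \<and>
        (\<forall>y. finite {x. f x y \<noteq> 0} \<and> y = (\<Sum>x\<in>{x. f x y \<noteq> 0}. s (f x y) x)))"

text \<open>Hopf algebra (H, mult, 1, Delta, eps, S) over k; Delta h is a representative of
  sum h_(1) (x) h_(2).\<close>
definition hopf_algebra ::
  "('k::comm_ring_1 \<Rightarrow> 'h::ring_1 \<Rightarrow> 'h) \<Rightarrow> ('h \<Rightarrow> ('h \<times> 'h) list) \<Rightarrow> ('h \<Rightarrow> 'k)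
   \<Rightarrow> ('h \<Rightarrow> 'h) \<Rightarrow> bool" where
  "hopf_algebra s Delta eps S \<longleftrightarrow>
     k_algebra s \<and>
     (\<forall>x y. teq2 s s (Delta (x + y)) (Delta x @ Delta y)) \<and>
     (\<forall>c x. teq2 s s (Delta (s c x)) (map (\<lambda>(a, b). (s c a, b)) (Delta x))) \<and>
     module_hom s (*) eps \<and>
     (\<forall>h. teq3 s s s [(a1, a2, b). (a, b) \<leftarrow> Delta h, (a1, a2) \<leftarrow> Delta a]
                     [(a, b1, b2). (a, b) \<leftarrow> Delta h, (b1, b2) \<leftarrow> Delta b]) \<and>
     (\<forall>h. sum_list (map (\<lambda>(a, b). s (eps a) b) (Delta h)) = h) \<and>
     (\<forall>h. sum_list (map (\<lambda>(a, b). s (eps b) a) (Delta h)) = h) \<and>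
     (\<forall>x y. teq2 s s (Delta (x * y)) (tmul2 (Delta x) (Delta y))) \<and>
     teq2 s s (Delta 1) [(1, 1)] \<and>
     (\<forall>x y. eps (x * y) = eps x * eps y) \<and> eps 1 = 1 \<and>
     module_hom s s S \<and>
     (\<forall>h. sum_list (map (\<lambda>(a, b). S a * b) (Delta h)) = s (eps h) 1) \<and>
     (\<forall>h. sum_list (map (\<lambda>(a, b). a * S b) (Delta h)) = s (eps h) 1)"

text \<open>Left H-comodule algebra A; rho a is a representative of sum a_<-1> (x) a_<0>.\<close>
definition comodule_algebra ::
  "('k::comm_ring_1 \<Rightarrow> 'h::ring_1 \<Rightarrow> 'h) \<Rightarrow> ('h \<Rightarrow> ('h \<times> 'h) list) \<Rightarrow> ('h \<Rightarrow> 'k)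
   \<Rightarrow> ('k \<Rightarrow> 'a::ring_1 \<Rightarrow> 'a) \<Rightarrow> ('a \<Rightarrow> ('h \<times> 'a) list) \<Rightarrow> bool" where
  "comodule_algebra sh Delta eps sa rho \<longleftrightarrow>
     k_algebra sa \<and>
     (\<forall>x y. teq2 sh sa (rho (x + y)) (rho x @ rho y)) \<and>
     (\<forall>c x. teq2 sh sa (rho (sa c x)) (map (\<lambda>(a, b). (sh c a, b)) (rho x))) \<and>
     (\<forall>a. teq3 sh sh sa [(x1, x2, b). (x, b) \<leftarrow> rho a, (x1, x2) \<leftarrow> Delta x]
                        [(x, y, e). (x, b) \<leftarrow> rho a, (y, e) \<leftarrow> rho b]) \<and>
     (\<forall>a. sum_list (map (\<lambda>(x, b). sa (eps x) b) (rho a)) = a) \<and>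
     (\<forall>x y. teq2 sh sa (rho (x * y)) (tmul2 (rho x) (rho y))) \<and>
     teq2 sh sa (rho 1) [(1, 1)]"

definition colinear ::
  "('k::comm_ring_1 \<Rightarrow> 'h::ring_1 \<Rightarrow> 'h) \<Rightarrow> ('h \<Rightarrow> ('h \<times> 'h) list)
   \<Rightarrow> ('k \<Rightarrow> 'a::ring_1 \<Rightarrow> 'a) \<Rightarrow> ('a \<Rightarrow> ('h \<times> 'a) list) \<Rightarrow> ('h \<Rightarrow> 'a) \<Rightarrow> bool" where
  "colinear sh Delta sa rho phi \<longleftrightarrow>
     module_hom sh sa phi \<and>
     (\<forall>h. teq2 sh sa (rho (phi h)) [(x, phi y). (x, y) \<leftarrow> Delta h])"

text \<open>A-integral for the Doi-Hopf datum (H, A, H): a k-linear gamma : H -> Hom(H, A)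
  satisfying (i) and (ii).  In (i), a_<-2> (x) a_<-1> (x) a_<0> is computed as
  (id (x) rho) rho(a), which equals (Delta (x) id) rho(a) by coassociativity.\<close>
definition A_integral ::
  "('k::comm_ring_1 \<Rightarrow> 'h::ring_1 \<Rightarrow> 'h) \<Rightarrow> ('h \<Rightarrow> ('h \<times> 'h) list)
   \<Rightarrow> ('k \<Rightarrow> 'a::ring_1 \<Rightarrow> 'a) \<Rightarrow> ('a \<Rightarrow> ('h \<times> 'a) list) \<Rightarrow> ('h \<Rightarrow> 'h \<Rightarrow> 'a) \<Rightarrow> bool" where
  "A_integral sh Delta sa rho gamma \<longleftrightarrow>
     (\<forall>c. module_hom sh sa (gamma c)) \<and>
     (\<forall>c c' d. gamma (c + c') d = gamma c d + gamma c' d) \<and>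
     (\<forall>r c d. gamma (sh r c) d = sa r (gamma c d)) \<and>
     (\<forall>a c d. sum_list [e * gamma (c * x) (d * y). (x, b) \<leftarrow> rho a, (y, e) \<leftarrow> rho b]
              = gamma c d * a) \<and>
     (\<forall>c d. teq2 sh sa [(c1, gamma c2 d). (c1, c2) \<leftarrow> Delta c]
                      [(d2 * y, e). (d1, d2) \<leftarrow> Delta d, (y, e) \<leftarrow> rho (gamma c d1)])"

end

theory Submission
  imports Defs "HOL-Library.Multiset"
begin

definition Lin :: "('k::comm_ring_1 \<Rightarrow> 'm::ab_group_add \<Rightarrow> 'm) \<Rightarrow> ('p \<Rightarrow> 'm) \<Rightarrow> ('p \<Rightarrow> 'k) \<Rightarrow> 'm" where
  "Lin sm g u = (\<Sum>p\<in>{p. u p \<noteq> 0}. sm (u p) (g p))"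

context module
begin

lemma Lin_superset:
  assumes "finite F" "{p. u p \<noteq> 0} \<subseteq> F"
  shows "Lin scale g u = (\<Sum>p\<in>F. scale (u p) (g p))"
  unfolding Lin_def
  by (rule sum.mono_neutral_left) (use assms in auto)

lemma Lin_add:
  assumes "finite {p. u p \<noteq> 0}" "finite {p. v p \<noteq> 0}"
  shows "Lin scale g (\<lambda>p. u p + v p) = Lin scale g u + Lin scale g v"
proof -
  let ?F = "{p. u p \<noteq> 0} \<union> {p. v p \<noteq> 0}"
  have "Lin scale g (\<lambda>p. u p + v p) = (\<Sum>p\<in>?F. scale (u p + v p) (g p))"
    by (rule Lin_superset) (use assms in auto)
  also have "\<dots> = (\<Sum>p\<in>?F. scale (u p) (g p)) + (\<Sum>p\<in>?F. scale (v p) (g p))"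
    by (simp add: scale_left_distrib sum.distrib)
  also have "\<dots> = Lin scale g u + Lin scale g v"
    using assms by (simp add: Lin_superset[of ?F])
  finally show ?thesis .
qed

lemma Lin_smult:
  assumes "finite {p. u p \<noteq> 0}"
  shows "Lin scale g (\<lambda>p. c * u p) = scale c (Lin scale g u)"
proof -
  have "Lin scale g (\<lambda>p. c * u p) = (\<Sum>p\<in>{p. u p \<noteq> 0}. scale (c * u p) (g p))"
    by (rule Lin_superset) (use assms in auto)
  also have "\<dots> = scale c (Lin scale g u)"
    by (simp add: Lin_def scale_sum_right)
  finally show ?thesis .
qed

lemma Lin_diff:
  assumes "finite {p. u p \<noteq> 0}" "finite {p. v p \<noteq> 0}"
  shows "Lin scale g (\<lambda>p. u p - v p) = Lin scale g u - Lin scale g v"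
proof -
  have f: "finite {p. - v p \<noteq> 0}" using assms by simp
  have "Lin scale g (\<lambda>p. - v p) = - Lin scale g v"
    using Lin_smult[OF assms(2), where c="-1"] by simp
  then show ?thesis
    using Lin_add[OF assms(1) f] by simp
qed

lemma Lin_dl: "Lin scale g (dl q) = g q"
proof -
  have "Lin scale g (dl q) = (\<Sum>p\<in>{q}. scale (dl q p) (g p))"
    by (rule Lin_superset) (auto simp: dl_def)
  then show ?thesis by (simp add: dl_def)
qed

lemma fin_dl: "finite {p. dl q p \<noteq> (0::'a)}"
  by (rule finite_subset[of _ "{q}"]) (auto simp: dl_def)

lemma Lin_sdl: "Lin scale g (\<lambda>p. c * dl q p) = scale c (g q)"
  by (simp add: Lin_smult fin_dl Lin_dl)


lemma Lin_dl3: "finite {p. dl a p - dl b p - dl c p \<noteq> (0::'a)} \<and> Lin scale g (\<lambda>p. dl a p - dl b p - dl c p) = g a - g b - g c"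
proof
  show fin: "finite {p. dl a p - dl b p - dl c p \<noteq> (0::'a)}"
    by (rule finite_subset[of _ "{a,b,c}"]) (auto simp: dl_def)
  have f2: "finite {p. dl a p - dl b p \<noteq> (0::'a)}"
    by (rule finite_subset[of _ "{a,b}"]) (auto simp: dl_def)
  show "Lin scale g (\<lambda>p. dl a p - dl b p - dl c p) = g a - g b - g c"
    using Lin_diff[OF f2 fin_dl[of c]] Lin_diff[OF fin_dl fin_dl] by (simp add: Lin_dl)
qed

lemma Lin_dl2: "finite {p. dl a p - c * dl b p \<noteq> (0::'a)} \<and> Lin scale g (\<lambda>p. dl a p - c * dl b p) = g a - scale c (g b)"
proof
  show fin: "finite {p. dl a p - c * dl b p \<noteq> (0::'a)}"
    by (rule finite_subset[of _ "{a,b}"]) (auto simp: dl_def)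
  have f2: "finite {p. c * dl b p \<noteq> (0::'a)}"
    by (rule finite_subset[of _ "{b}"]) (auto simp: dl_def)
  show "Lin scale g (\<lambda>p. dl a p - c * dl b p) = g a - scale c (g b)"
    using Lin_diff[OF fin_dl f2] by (simp add: Lin_dl Lin_sdl)
qed

lemma fin_fsum: "finite {p. fsum xs p \<noteq> (0::'a)}"
  by (rule finite_subset[of _ "set xs"]) (auto simp: fsum_def, metis count_list_0_iff of_nat_0)

lemma fsum_Cons: "fsum (x # xs) = (\<lambda>p. dl x p + fsum xs p)"
  by (auto simp: fsum_def dl_def fun_eq_iff)

lemma Lin_fsum: "Lin scale g (fsum xs :: _ \<Rightarrow> 'a) = sum_list (map g xs)"
proof (induction xs)
  case Nil
  then show ?case by (simp add: Lin_def fsum_def)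
next
  case (Cons x xs)
  then show ?case
    by (simp add: fsum_Cons Lin_add fin_dl fin_fsum Lin_dl)
qed

end

definition bil2 where
  "bil2 sx sy sm f \<longleftrightarrow> (\<forall>x x' y. f (x + x') y = f x y + f x' y) \<and> (\<forall>x y y'. f x (y + y') = f x y + f x y')
     \<and> (\<forall>c x y. f (sx c x) y = sm c (f x y)) \<and> (\<forall>c x y. f x (sy c y) = sm c (f x y))"

definition tril3 where
  "tril3 sx sy sz sm f \<longleftrightarrow> (\<forall>x x' y z. f (x + x') y z = f x y z + f x' y z)
     \<and> (\<forall>x y y' z. f x (y + y') z = f x y z + f x y' z)
     \<and> (\<forall>x y z z'. f x y (z + z') = f x y z + f x y z')
     \<and> (\<forall>c x y z. f (sx c x) y z = sm c (f x y z)) \<and> (\<forall>c x y z. f x (sy c y) z = sm c (f x y z))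
     \<and> (\<forall>c x y z. f x y (sz c z) = sm c (f x y z))"

lemma tzero2_Lin:
  assumes m: "module sm" and b: "bil2 sx sy sm f" and u: "u \<in> tzero2 sx sy"
  shows "finite {p. u p \<noteq> 0} \<and> Lin sm (\<lambda>(x, y). f x y) u = 0"
  using u
proof (induction rule: tzero2.induct)
  case z
  then show ?case by (simp add: Lin_def)
next
  case (add u v)
  then show ?case
    by (auto simp: module.Lin_add[OF m] intro: finite_subset[of _ "{p. u p \<noteq> 0} \<union> {p. v p \<noteq> 0}"])
next
  case (smult u c)
  then show ?case
    by (auto simp: module.Lin_smult[OF m] module.scale_zero_right[OF m] intro: finite_subset[of _ "{p. u p \<noteq> 0}"])
next
  case (addL x x' y)
  show ?case
    using b module.Lin_dl3[OF m, of "(x + x', y)" "(x, y)" "(x', y)" "\<lambda>(x, y). f x y"] by (simp add: bil2_def)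
next
  case (addR x y y')
  show ?case
    using b module.Lin_dl3[OF m, of "(x, y + y')" "(x, y)" "(x, y')" "\<lambda>(x, y). f x y"] by (simp add: bil2_def)
next
  case (scL c x y)
  show ?case
    using b module.Lin_dl2[OF m, of "(sx c x, y)" c "(x, y)" "\<lambda>(x, y). f x y"] by (simp add: bil2_def)
next
  case (scR x c y)
  show ?case
    using b module.Lin_dl2[OF m, of "(x, sy c y)" c "(x, y)" "\<lambda>(x, y). f x y"] by (simp add: bil2_def)
qed

lemma teq2_transfer:
  assumes m: "module sm" and b: "bil2 sx sy sm f" and t: "teq2 sx sy xs ys"
  shows "sum_list (map (\<lambda>(x, y). f x y) xs) = sum_list (map (\<lambda>(x, y). f x y) ys)"
proof -
  have "Lin sm (\<lambda>(x, y). f x y) (\<lambda>p. fsum xs p - fsum ys p) = 0"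
    using tzero2_Lin[OF m b] t unfolding teq2_def by blast
  then show ?thesis
    by (simp add: module.Lin_diff[OF m] module.fin_fsum[OF m] module.Lin_fsum[OF m])
qed

lemma tzero3_Lin:
  assumes m: "module sm" and b: "tril3 sx sy sz sm f" and u: "u \<in> tzero3 sx sy sz"
  shows "finite {p. u p \<noteq> 0} \<and> Lin sm (\<lambda>(x, y, z). f x y z) u = 0"
  using u
proof (induction rule: tzero3.induct)
  case z
  then show ?case by (simp add: Lin_def)
next
  case (add u v)
  then show ?case
    by (auto simp: module.Lin_add[OF m] intro: finite_subset[of _ "{p. u p \<noteq> 0} \<union> {p. v p \<noteq> 0}"])
next
  case (smult u c)
  then show ?case
    by (auto simp: module.Lin_smult[OF m] module.scale_zero_right[OF m] intro: finite_subset[of _ "{p. u p \<noteq> 0}"])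
next
  case (add1 x x' y w)
  show ?case
    using b module.Lin_dl3[OF m, of "(x + x', y, w)" "(x, y, w)" "(x', y, w)" "\<lambda>(x, y, z). f x y z"] by (simp add: tril3_def)
next
  case (add2 x y y' w)
  show ?case
    using b module.Lin_dl3[OF m, of "(x, y + y', w)" "(x, y, w)" "(x, y', w)" "\<lambda>(x, y, z). f x y z"] by (simp add: tril3_def)
next
  case (add3 x y w w')
  show ?case
    using b module.Lin_dl3[OF m, of "(x, y, w + w')" "(x, y, w)" "(x, y, w')" "\<lambda>(x, y, z). f x y z"] by (simp add: tril3_def)
next
  case (sc1 c x y w)
  show ?case
    using b module.Lin_dl2[OF m, of "(sx c x, y, w)" c "(x, y, w)" "\<lambda>(x, y, z). f x y z"] by (simp add: tril3_def)
next
  case (sc2 x c y w)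
  show ?case
    using b module.Lin_dl2[OF m, of "(x, sy c y, w)" c "(x, y, w)" "\<lambda>(x, y, z). f x y z"] by (simp add: tril3_def)
next
  case (sc3 x y c w)
  show ?case
    using b module.Lin_dl2[OF m, of "(x, y, sz c w)" c "(x, y, w)" "\<lambda>(x, y, z). f x y z"] by (simp add: tril3_def)
qed

lemma teq3_transfer:
  assumes m: "module sm" and b: "tril3 sx sy sz sm f" and t: "teq3 sx sy sz xs ys"
  shows "sum_list (map (\<lambda>(x, y, z). f x y z) xs) = sum_list (map (\<lambda>(x, y, z). f x y z) ys)"
proof -
  have "Lin sm (\<lambda>(x, y, z). f x y z) (\<lambda>p. fsum xs p - fsum ys p) = 0"
    using tzero3_Lin[OF m b] t unfolding teq3_def by blast
  then show ?thesis
    by (simp add: module.Lin_diff[OF m] module.fin_fsum[OF m] module.Lin_fsum[OF m])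
qed

lemma fsum_Nil: "fsum [] = (\<lambda>p. 0)"
  by (simp add: fsum_def fun_eq_iff)

lemma fsum_Cons': "fsum (x # xs) p = dl x p + fsum xs p"
  by (auto simp: fsum_def dl_def)

lemma fsum_append: "fsum (xs @ ys) p = fsum xs p + fsum ys p"
  by (simp add: fsum_def)

lemma teq2I: "(\<lambda>p. fsum xs p - fsum ys p) = u \<Longrightarrow> u \<in> tzero2 sx sy \<Longrightarrow> teq2 sx sy xs ys"
  by (simp add: teq2_def)

lemma teq2_refl: "teq2 sx sy xs xs"
  by (rule teq2I[where u="\<lambda>p. 0"]) (auto intro: tzero2.z)

lemma teq2_sym: assumes "teq2 sx sy xs ys" shows "teq2 sx sy ys xs"
proof -
  have "(\<lambda>p. (-1) * (fsum xs p - fsum ys p)) \<in> tzero2 sx sy"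
    using assms unfolding teq2_def by (rule tzero2.smult)
  then show ?thesis by (auto simp: teq2_def)
qed

lemma teq2_trans: assumes "teq2 sx sy xs ys" "teq2 sx sy ys zs" shows "teq2 sx sy xs zs"
proof -
  have "(\<lambda>p. (fsum xs p - fsum ys p) + (fsum ys p - fsum zs p)) \<in> tzero2 sx sy"
    using assms unfolding teq2_def by (rule tzero2.add)
  then show ?thesis by (auto simp: teq2_def)
qed

lemma teq2_append: assumes "teq2 sx sy a b" "teq2 sx sy c d" shows "teq2 sx sy (a @ c) (b @ d)"
proof -
  have "(\<lambda>p. (fsum a p - fsum b p) + (fsum c p - fsum d p)) \<in> tzero2 sx sy"
    using assms unfolding teq2_def by (rule tzero2.add)
  then show ?thesis by (auto simp: teq2_def fsum_append algebra_simps)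
qed

lemma teq2_concat: assumes "\<And>x. x \<in> set xs \<Longrightarrow> teq2 sx sy (G x) (H x)"
  shows "teq2 sx sy (concat (map G xs)) (concat (map H xs))"
  using assms by (induction xs) (auto intro: teq2_append teq2_refl)

lemma teq2_map: assumes "\<And>x. x \<in> set xs \<Longrightarrow> teq2 sx sy [G x] [H x]"
  shows "teq2 sx sy (map G xs) (map H xs)"
  using teq2_concat[of xs sx sy "\<lambda>x. [G x]" "\<lambda>x. [H x]"] assms by simp

lemma teq2_mset: fixes sx :: "'k::comm_ring_1 \<Rightarrow> 'x::ab_group_add \<Rightarrow> 'x"
  assumes "mset xs = mset ys" shows "teq2 sx sy xs ys"
proof -
  have "\<forall>p. count_list xs p = count_list ys p" using assms
    by (metis count_mset)
  then have "(\<lambda>p. fsum xs p - fsum ys p) = (\<lambda>p. 0::'k)" by (simp add: fsum_def fun_eq_iff del: split_paired_All)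
  then show ?thesis unfolding teq2_def using tzero2.z by metis
qed

lemma mset_concat_Cons: "mset (concat (map (\<lambda>b. f b # g b) ys)) = mset (map f ys) + mset (concat (map g ys))"
  by (induction ys) auto

lemma mset_swap: "mset (concat (map (\<lambda>a. map (\<lambda>b. F a b) ys) xs)) = mset (concat (map (\<lambda>b. map (\<lambda>a. F a b) xs) ys))"
proof (induction xs)
  case Nil
  then show ?case by (induction ys) auto
next
  case (Cons x xs)
  then show ?case by (simp add: mset_concat_Cons)
qed

lemma teq2_addL: "teq2 sx sy [(x + x', y)] [(x, y), (x', y)]"
  by (rule teq2I[OF _ tzero2.addL[of x x' y]]) (simp add: fun_eq_iff fsum_Cons' fsum_Nil)

lemma teq2_addR: "teq2 sx sy [(x, y + y')] [(x, y), (x, y')]"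
  by (rule teq2I[OF _ tzero2.addR[of x y y']]) (simp add: fun_eq_iff fsum_Cons' fsum_Nil)

lemma teq2_zeroL: "teq2 sx sy [(0, y)] []"
proof -
  have "(\<lambda>p. (-1) * (dl (0 + 0, y) p - dl (0, y) p - dl (0, y) p)) \<in> tzero2 sx sy"
    by (rule tzero2.smult[OF tzero2.addL])
  then show ?thesis
    by (rule teq2I[rotated]) (simp add: fun_eq_iff fsum_Cons' fsum_Nil)
qed

lemma teq2_zeroR: "teq2 sx sy [(x, 0)] []"
proof -
  have "(\<lambda>p. (-1) * (dl (x, 0 + 0) p - dl (x, 0) p - dl (x, 0) p)) \<in> tzero2 sx sy"
    by (rule tzero2.smult[OF tzero2.addR])
  then show ?thesis
    by (rule teq2I[rotated]) (simp add: fun_eq_iff fsum_Cons' fsum_Nil)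
qed

lemma teq2_scale_swap: "teq2 sx sy [(sx c x, y)] [(x, sy c y)]"
proof -
  have "(\<lambda>p. (dl (sx c x, y) p - c * dl (x, y) p) + (-1) * (dl (x, sy c y) p - c * dl (x, y) p)) \<in> tzero2 sx sy"
    by (rule tzero2.add[OF tzero2.scL tzero2.smult[OF tzero2.scR]])
  then show ?thesis
    by (rule teq2I[rotated]) (simp add: fun_eq_iff fsum_Cons' fsum_Nil)
qed

lemma teq2_Cons: "teq2 sx sy [a] [b] \<Longrightarrow> teq2 sx sy xs ys \<Longrightarrow> teq2 sx sy (a # xs) (b # ys)"
  using teq2_append[of sx sy "[a]" "[b]" xs ys] by simp

lemma teq2_sumL: "teq2 sx sy [(sum_list (map g xs), y)] (map (\<lambda>x. (g x, y)) xs)"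
proof (induction xs)
  case Nil
  then show ?case by (simp add: teq2_zeroL)
next
  case (Cons a xs)
  have "teq2 sx sy [(g a + sum_list (map g xs), y)] ([(g a, y)] @ [(sum_list (map g xs), y)])"
    using teq2_addL by simp
  moreover have "teq2 sx sy ([(g a, y)] @ [(sum_list (map g xs), y)]) ([(g a, y)] @ map (\<lambda>x. (g x, y)) xs)"
    by (rule teq2_append[OF teq2_refl Cons])
  ultimately show ?case using teq2_trans by fastforce
qed

lemma teq2_sumR: "teq2 sx sy [(x, sum_list (map g ys))] (map (\<lambda>y. (x, g y)) ys)"
proof (induction ys)
  case Nil
  then show ?case by (simp add: teq2_zeroR)
next
  case (Cons a ys)
  have "teq2 sx sy [(x, g a + sum_list (map g ys))] ([(x, g a)] @ [(x, sum_list (map g ys))])"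
    using teq2_addR by simp
  moreover have "teq2 sx sy ([(x, g a)] @ [(x, sum_list (map g ys))]) ([(x, g a)] @ map (\<lambda>y. (x, g y)) ys)"
    by (rule teq2_append[OF teq2_refl Cons])
  ultimately show ?case using teq2_trans by fastforce
qed

definition ev :: "('k::comm_ring_1 \<Rightarrow> 'a \<Rightarrow> 'a) \<Rightarrow> ('h \<Rightarrow> 'k) \<Rightarrow> ('h \<times> 'a::ab_group_add) list \<Rightarrow> 'a" where
  "ev sa \<phi> t = sum_list (map (\<lambda>(h, a). sa (\<phi> h) a) t)"

lemma teq2_normal:
  fixes sh :: "'k::comm_ring_1 \<Rightarrow> 'h::ab_group_add \<Rightarrow> 'h" and sa :: "'k \<Rightarrow> 'a::ab_group_add \<Rightarrow> 'a"
  assumes h: "\<And>p. p \<in> set v \<Longrightarrow> fst p = sum_list (map (\<lambda>x. sh (f x (fst p)) x) xs)"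
  shows "teq2 sh sa v (map (\<lambda>x. (x, ev sa (f x) v)) xs)"
proof -
  have 1: "teq2 sh sa v (concat (map (\<lambda>p. map (\<lambda>x. (sh (f x (fst p)) x, snd p)) xs) v))"
  proof -
    have "teq2 sh sa (concat (map (\<lambda>p. [p]) v)) (concat (map (\<lambda>p. map (\<lambda>x. (sh (f x (fst p)) x, snd p)) xs) v))"
    proof (rule teq2_concat)
      fix p assume "p \<in> set v"
      have "teq2 sh sa [(sum_list (map (\<lambda>x. sh (f x (fst p)) x) xs), snd p)] (map (\<lambda>x. (sh (f x (fst p)) x, snd p)) xs)"
        by (rule teq2_sumL)
      then show "teq2 sh sa [p] (map (\<lambda>x. (sh (f x (fst p)) x, snd p)) xs)"
        using h[OF \<open>p \<in> set v\<close>] by (metis prod.collapse)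
    qed
    then show ?thesis by simp
  qed
  have 2: "teq2 sh sa (concat (map (\<lambda>p. map (\<lambda>x. (sh (f x (fst p)) x, snd p)) xs) v))
                       (concat (map (\<lambda>p. map (\<lambda>x. (x, sa (f x (fst p)) (snd p))) xs) v))"
    by (rule teq2_concat, rule teq2_map, rule teq2_scale_swap)
  have 3: "teq2 sh sa (concat (map (\<lambda>p. map (\<lambda>x. (x, sa (f x (fst p)) (snd p))) xs) v))
                       (concat (map (\<lambda>x. map (\<lambda>p. (x, sa (f x (fst p)) (snd p))) v) xs))"
    by (rule teq2_mset) (rule mset_swap)
  have 4: "teq2 sh sa (concat (map (\<lambda>x. map (\<lambda>p. (x, sa (f x (fst p)) (snd p))) v) xs))
                       (concat (map (\<lambda>x. [(x, ev sa (f x) v)]) xs))"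
  proof (rule teq2_concat)
    fix x
    have "teq2 sh sa [(x, sum_list (map (\<lambda>p. sa (f x (fst p)) (snd p)) v))] (map (\<lambda>p. (x, sa (f x (fst p)) (snd p))) v)"
      by (rule teq2_sumR)
    moreover have "sum_list (map (\<lambda>p. sa (f x (fst p)) (snd p)) v) = ev sa (f x) v"
      unfolding ev_def by (metis case_prod_beta')
    ultimately show "teq2 sh sa (map (\<lambda>p. (x, sa (f x (fst p)) (snd p))) v) [(x, ev sa (f x) v)]"
      using teq2_sym by metis
  qed
  have "teq2 sh sa v (concat (map (\<lambda>x. [(x, ev sa (f x) v)]) xs))"
    using teq2_trans[OF teq2_trans[OF teq2_trans[OF 1 2] 3] 4] .
  then show ?thesis by simp
qed

lemma separation:
  fixes sh :: "'k::comm_ring_1 \<Rightarrow> 'h::ab_group_add \<Rightarrow> 'h" and sa :: "'k \<Rightarrow> 'a::ab_group_add \<Rightarrow> 'a"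
  assumes proj: "projective_module sh"
    and H: "\<And>\<phi>. module_hom sh (*) \<phi> \<Longrightarrow> ev sa \<phi> t = ev sa \<phi> u"
  shows "teq2 sh sa t u"
proof -
  obtain f :: "'h \<Rightarrow> 'h \<Rightarrow> 'k" where fh: "\<And>x. module_hom sh (*) (f x)"
    and fs: "\<And>y. finite {x. f x y \<noteq> 0}" and fy: "\<And>y. y = (\<Sum>x\<in>{x. f x y \<noteq> 0}. sh (f x y) x)"
    using proj unfolding projective_module_def by blast
  have mh: "module sh" using proj unfolding projective_module_def by blast
  define X where "X = (\<Union>h \<in> fst ` (set t \<union> set u). {x. f x h \<noteq> 0})"
  have "finite X" unfolding X_def using fs by auto
  then obtain xs where xs: "set xs = X" "distinct xs" using finite_distinct_list by blast
  have key: "fst p = sum_list (map (\<lambda>x. sh (f x (fst p)) x) xs)" if "p \<in> set t \<union> set u" for p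
  proof -
    have sub: "{x. f x (fst p) \<noteq> 0} \<subseteq> X" unfolding X_def using that by blast
    have "sum_list (map (\<lambda>x. sh (f x (fst p)) x) xs) = (\<Sum>x\<in>X. sh (f x (fst p)) x)"
      using xs by (simp add: sum_list_distinct_conv_sum_set)
    also have "\<dots> = (\<Sum>x\<in>{x. f x (fst p) \<noteq> 0}. sh (f x (fst p)) x)"
      by (rule sum.mono_neutral_right) (use \<open>finite X\<close> sub module.scale_zero_left[OF mh] in auto)
    finally show ?thesis using fy by metis
  qed
  have t: "teq2 sh sa t (map (\<lambda>x. (x, ev sa (f x) t)) xs)"
    by (rule teq2_normal) (use key in auto)
  have u: "teq2 sh sa u (map (\<lambda>x. (x, ev sa (f x) u)) xs)"
    by (rule teq2_normal) (use key in auto)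
  have "map (\<lambda>x. (x, ev sa (f x) t)) xs = map (\<lambda>x. (x, ev sa (f x) u)) xs"
    using H[OF fh] by simp
  then show ?thesis using teq2_trans[OF t] teq2_sym[OF u] by metis
qed

lemma sum_list_concat_split: "sum_list (concat (map (\<lambda>(x, b). G x b) t)) = (\<Sum>(x, b)\<leftarrow>t. sum_list (G x b))"
  by (induction t) auto

lemma ev_map: "ev sa \<phi> (map (\<lambda>(a, b). (F a b, G a b)) t) = (\<Sum>(a, b)\<leftarrow>t. sa (\<phi> (F a b)) (G a b))"
  by (induction t) (auto simp: ev_def)

lemma ev_append: "ev sa \<phi> (t @ u) = ev sa \<phi> t + ev sa \<phi> u"
  by (simp add: ev_def)

lemma ev_concat: "ev sa \<phi> (concat (map (\<lambda>(a, b). L a b) t)) = (\<Sum>(a, b)\<leftarrow>t. ev sa \<phi> (L a b))"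
  by (induction t) (auto simp: ev_def)

lemma ev_single: "ev sa \<phi> [(a, b)] = sa (\<phi> a) b"
  by (simp add: ev_def)

lemma sum_list_scale: "module sm \<Longrightarrow> sm c (\<Sum>p\<leftarrow>t. g p) = (\<Sum>p\<leftarrow>t. sm c (g p))"
  by (induction t) (auto simp: module.scale_right_distrib module.scale_zero_right)

lemma sum_list_swap: "(\<Sum>a\<leftarrow>xs. \<Sum>b\<leftarrow>ys. f a b) = (\<Sum>b\<leftarrow>ys. \<Sum>a\<leftarrow>xs. (f a b :: 'm::ab_group_add))"
  by (induction xs) (auto simp: sum_list_addf)

lemma sum_list_add_distrib: "(\<Sum>p\<leftarrow>t. f p + g p) = (\<Sum>p\<leftarrow>t. f p) + (\<Sum>p\<leftarrow>t. (g p :: 'm::ab_group_add))"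
  by (rule sum_list_addf)

lemma sum_map_scl: assumes "\<And>c x y. f (s c x) y = sm c (f x y)"
  shows "(\<Sum>(a, b)\<leftarrow>map (\<lambda>(a, b). (s c a, b)) t. f a b) = (\<Sum>(a, b)\<leftarrow>t. sm c (f a b))"
  using assms by (induction t) auto

locale HS =
  fixes sh :: "'k::comm_ring_1 \<Rightarrow> 'h::ring_1 \<Rightarrow> 'h"
    and sa :: "'k \<Rightarrow> 'a::ring_1 \<Rightarrow> 'a"
    and Delta :: "'h \<Rightarrow> ('h \<times> 'h) list" and eps :: "'h \<Rightarrow> 'k" and S :: "'h \<Rightarrow> 'h"
    and rho :: "'a \<Rightarrow> ('h \<times> 'a) list" and phi :: "'h \<Rightarrow> 'a"
  assumes hopf: "hopf_algebra sh Delta eps S"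
    and proj: "projective_module sh"
    and com: "comodule_algebra sh Delta eps sa rho"
    and col: "colinear sh Delta sa rho phi"
begin

lemma mH: "module sh" using hopf by (simp add: hopf_algebra_def k_algebra_def)
lemma mA: "module sa" using com by (simp add: comodule_algebra_def k_algebra_def)
lemma mk: "module ((*) :: 'k \<Rightarrow> 'k \<Rightarrow> 'k)" by unfold_locales (auto simp: algebra_simps)

lemma shm1: "sh c x * y = sh c (x * y)" using hopf by (simp add: hopf_algebra_def k_algebra_def)
lemma shm2: "x * sh c y = sh c (x * y)" using hopf unfolding hopf_algebra_def k_algebra_def by metis
lemma sam1: "sa c x * y = sa c (x * y)" using com by (simp add: comodule_algebra_def k_algebra_def)
lemma sam2: "x * sa c y = sa c (x * y)" using com unfolding comodule_algebra_def k_algebra_def by metis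

lemma D_add: "teq2 sh sh (Delta (x + y)) (Delta x @ Delta y)" using hopf by (simp add: hopf_algebra_def)
lemma D_sc: "teq2 sh sh (Delta (sh c x)) (map (\<lambda>(a, b). (sh c a, b)) (Delta x))" using hopf by (simp add: hopf_algebra_def)
lemma eps_hom: "module_hom sh (*) eps" using hopf by (simp add: hopf_algebra_def)
lemma eps_add: "eps (x + y) = eps x + eps y" using eps_hom by (simp add: module_hom.add)
lemma eps_sc: "eps (sh c x) = c * eps x" using eps_hom by (simp add: module_hom.scale)
lemma coass: "teq3 sh sh sh (concat (map (\<lambda>(a, b). map (\<lambda>(a1, a2). (a1, a2, b)) (Delta a)) (Delta h)))
         (concat (map (\<lambda>(a, b). map (\<lambda>(b1, b2). (a, b1, b2)) (Delta b)) (Delta h)))"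
  using hopf by (simp add: hopf_algebra_def)
lemma counitL: "(\<Sum>(a, b)\<leftarrow>Delta h. sh (eps a) b) = h" using hopf by (simp add: hopf_algebra_def)
lemma counitR: "(\<Sum>(a, b)\<leftarrow>Delta h. sh (eps b) a) = h" using hopf by (simp add: hopf_algebra_def)
lemma D_mult: "teq2 sh sh (Delta (x * y)) (tmul2 (Delta x) (Delta y))" using hopf by (simp add: hopf_algebra_def)
lemma D_one: "teq2 sh sh (Delta 1) [(1, 1)]" using hopf by (simp add: hopf_algebra_def)
lemma eps_mult: "eps (x * y) = eps x * eps y" using hopf by (simp add: hopf_algebra_def)
lemma eps_one: "eps 1 = 1" using hopf by (simp add: hopf_algebra_def)
lemma S_hom: "module_hom sh sh S" using hopf by (simp add: hopf_algebra_def)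
lemma S_add: "S (x + y) = S x + S y" using S_hom by (simp add: module_hom.add)
lemma S_sc: "S (sh c x) = sh c (S x)" using S_hom by (simp add: module_hom.scale)
lemma antiL: "(\<Sum>(a, b)\<leftarrow>Delta h. S a * b) = sh (eps h) 1" using hopf by (simp add: hopf_algebra_def)
lemma antiR: "(\<Sum>(a, b)\<leftarrow>Delta h. a * S b) = sh (eps h) 1" using hopf by (simp add: hopf_algebra_def)

lemma R_add: "teq2 sh sa (rho (x + y)) (rho x @ rho y)" using com by (simp add: comodule_algebra_def)
lemma R_sc: "teq2 sh sa (rho (sa c x)) (map (\<lambda>(a, b). (sh c a, b)) (rho x))" using com by (simp add: comodule_algebra_def)
lemma R_coass: "teq3 sh sh sa
         (concat (map (\<lambda>(x, b). map (\<lambda>(x1, x2). (x1, x2, b)) (Delta x)) (rho a)))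
         (concat (map (\<lambda>(x, b). map (\<lambda>(y, e). (x, y, e)) (rho b)) (rho a)))"
  using com by (simp add: comodule_algebra_def)
lemma R_counit: "(\<Sum>(x, b)\<leftarrow>rho a. sa (eps x) b) = a" using com by (simp add: comodule_algebra_def)

lemma phi_hom: "module_hom sh sa phi" using col by (simp add: colinear_def)
lemma phi_add: "phi (x + y) = phi x + phi y" using phi_hom by (simp add: module_hom.add)
lemma phi_sc: "phi (sh c x) = sa c (phi x)" using phi_hom by (simp add: module_hom.scale)
lemma colin: "teq2 sh sa (rho (phi h)) (map (\<lambda>(x, y). (x, phi y)) (Delta h))" using col by (simp add: colinear_def)

lemma S_zero[simp]: "S 0 = 0" using S_hom by (simp add: module_hom.zero)
lemma phi_zero[simp]: "phi 0 = 0" using phi_hom by (simp add: module_hom.zero)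
lemma eps_zero[simp]: "eps 0 = 0" using eps_hom by (simp add: module_hom.zero)

lemma sh_sum_list: "sh c (\<Sum>p\<leftarrow>t. g p) = (\<Sum>p\<leftarrow>t. sh c (g p))" by (rule sum_list_scale[OF mH])
lemma sa_sum_list: "sa c (\<Sum>p\<leftarrow>t. g p) = (\<Sum>p\<leftarrow>t. sa c (g p))" by (rule sum_list_scale[OF mA])

lemma S_sum_list: "S (\<Sum>p\<leftarrow>t. g p) = (\<Sum>p\<leftarrow>t. S (g p))" by (induction t) (auto simp: S_add)
lemma phi_sum_list: "phi (\<Sum>p\<leftarrow>t. g p) = (\<Sum>p\<leftarrow>t. phi (g p))" by (induction t) (auto simp: phi_add)
lemma eps_sum_list: "eps (\<Sum>p\<leftarrow>t. g p) = (\<Sum>p\<leftarrow>t. eps (g p))" by (induction t) (auto simp: eps_add)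

lemmas lin_simps = distrib_left distrib_right S_add S_sc phi_add phi_sc eps_add eps_sc shm1 shm2 sam1 sam2
  module.scale_right_distrib[OF mH] module.scale_left_distrib[OF mH]
  module.scale_right_distrib[OF mA] module.scale_left_distrib[OF mA]
  module.scale_scale[OF mH, symmetric] module.scale_scale[OF mA, symmetric]

lemma sumD_add: assumes "module sm" "bil2 sh sh sm f"
  shows "(\<Sum>(a, b)\<leftarrow>Delta (x + y). f a b) = (\<Sum>(a, b)\<leftarrow>Delta x. f a b) + (\<Sum>(a, b)\<leftarrow>Delta y. f a b)"
  using teq2_transfer[OF assms D_add] by simp

lemma sumD_sc: assumes m: "module sm" and b: "bil2 sh sh sm f"
  shows "(\<Sum>(a, b)\<leftarrow>Delta (sh c x). f a b) = sm c (\<Sum>(a, b)\<leftarrow>Delta x. f a b)"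
proof -
  have "(\<Sum>(a, b)\<leftarrow>Delta (sh c x). f a b) = (\<Sum>(a, b)\<leftarrow>map (\<lambda>(a, b). (sh c a, b)) (Delta x). f a b)"
    using teq2_transfer[OF m b D_sc] by simp
  also have "\<dots> = (\<Sum>(a, b)\<leftarrow>Delta x. sm c (f a b))"
    using b unfolding bil2_def by (intro sum_map_scl) auto
  finally show ?thesis by (simp add: sum_list_scale[OF m] case_prod_beta')
qed

lemma sumR_add: assumes "module sm" "bil2 sh sa sm f"
  shows "(\<Sum>(a, b)\<leftarrow>rho (x + y). f a b) = (\<Sum>(a, b)\<leftarrow>rho x. f a b) + (\<Sum>(a, b)\<leftarrow>rho y. f a b)"
  using teq2_transfer[OF assms R_add] by simp

lemma sumR_sc: assumes m: "module sm" and b: "bil2 sh sa sm f"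
  shows "(\<Sum>(a, b)\<leftarrow>rho (sa c x). f a b) = sm c (\<Sum>(a, b)\<leftarrow>rho x. f a b)"
proof -
  have "(\<Sum>(a, b)\<leftarrow>rho (sa c x). f a b) = (\<Sum>(a, b)\<leftarrow>map (\<lambda>(a, b). (sh c a, b)) (rho x). f a b)"
    using teq2_transfer[OF m b R_sc] by simp
  also have "\<dots> = (\<Sum>(a, b)\<leftarrow>rho x. sm c (f a b))"
    using b unfolding bil2_def by (intro sum_map_scl) auto
  finally show ?thesis by (simp add: sum_list_scale[OF m] case_prod_beta')
qed

lemma ev_teq: assumes "teq2 sh sa t u" "module_hom sh (*) \<phi>" shows "ev sa \<phi> t = ev sa \<phi> u"
proof -
  have "bil2 sh sa sa (\<lambda>h a. sa (\<phi> h) a)"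
    using assms(2) mA unfolding bil2_def
    by (simp add: module_hom.add module_hom.scale module.scale_left_distrib module.scale_right_distrib
        module.scale_scale module.scale_left_commute mult.commute)
  from teq2_transfer[OF mA this assms(1)] show ?thesis by (simp add: ev_def)
qed

lemma teq_iff: "teq2 sh sa t u \<longleftrightarrow> (\<forall>\<phi>. module_hom sh (*) \<phi> \<longrightarrow> ev sa \<phi> t = ev sa \<phi> u)"
  using ev_teq separation[OF proj] by blast

lemma S_one: "S 1 = 1"
proof -
  have "bil2 sh sh sh (\<lambda>a b. S a * b)"
    unfolding bil2_def by (simp add: lin_simps)
  from teq2_transfer[OF mH this D_one] antiL[of 1] show ?thesis
    by (simp add: eps_one module.scale_one[OF mH])
qed

end

lemma sum_pair_hom: assumes "\<And>x y. g (x + y) = g x + g y" "g 0 = 0"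
  shows "g (\<Sum>(a, b)\<leftarrow>t. f a b) = (\<Sum>(a, b)\<leftarrow>t. g (f a b))"
  using assms by (induction t) auto

lemma sum_pair_multL: "c * (\<Sum>(a, b)\<leftarrow>t. f a b) = (\<Sum>(a, b)\<leftarrow>t. c * f a b :: 'r::ring)"
  by (rule sum_pair_hom) (auto simp: distrib_left)

lemma sum_pair_multR: "(\<Sum>(a, b)\<leftarrow>t. f a b) * c = (\<Sum>(a, b)\<leftarrow>t. f a b * c :: 'r::ring)"
  by (rule sum_pair_hom[where g="\<lambda>x. x * c"]) (auto simp: distrib_right)

lemma sum_pair_add: "(\<Sum>(a, b)\<leftarrow>t. f a b + g a b) = (\<Sum>(a, b)\<leftarrow>t. f a b) + (\<Sum>(a, b)\<leftarrow>t. g a b :: 'm::ab_group_add)"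
  by (induction t) auto

lemma sum_pair_swap: "(\<Sum>(a, b)\<leftarrow>xs. \<Sum>(c, d)\<leftarrow>ys. f a b c d) = (\<Sum>(c, d)\<leftarrow>ys. \<Sum>(a, b)\<leftarrow>xs. (f a b c d :: 'm::ab_group_add))"
proof -
  have "(\<Sum>(a, b)\<leftarrow>xs. \<Sum>(c, d)\<leftarrow>ys. f a b c d) = (\<Sum>p\<leftarrow>xs. \<Sum>q\<leftarrow>ys. f (fst p) (snd p) (fst q) (snd q))"
    by (simp add: case_prod_beta')
  also have "\<dots> = (\<Sum>q\<leftarrow>ys. \<Sum>p\<leftarrow>xs. f (fst p) (snd p) (fst q) (snd q))"
    by (rule sum_list_swap)
  finally show ?thesis by (simp add: case_prod_beta')
qed

lemma sum_concat3: "sum_list (map (\<lambda>(x, y, z). F x y z) (concat (map (\<lambda>(a, b). map (\<lambda>(c, d). G a b c d) (L a b)) t)))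
   = (\<Sum>(a, b)\<leftarrow>t. \<Sum>(c, d)\<leftarrow>L a b. (\<lambda>(x, y, z). F x y z) (G a b c d))"
  by (induction t) (auto simp: map_concat o_def case_prod_beta')

lemma sum_concat3P: "sum_list (map (\<lambda>(x, y, z). F x y z) (concat (map (\<lambda>(a, b). map (Pair a) (L a b)) t)))
   = (\<Sum>(a, b)\<leftarrow>t. \<Sum>(c, d)\<leftarrow>L a b. F a c d)"
  by (induction t) (auto simp: map_concat o_def case_prod_beta')

lemma bil2_sumL: fixes B :: "'x::ab_group_add \<Rightarrow> 'y::ab_group_add \<Rightarrow> 'm::ab_group_add" assumes "bil2 sx sy sm B"
  shows "B (\<Sum>(a, b)\<leftarrow>t. f a b) y = (\<Sum>(a, b)\<leftarrow>t. B (f a b) y)"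
proof (rule sum_pair_hom[where g="\<lambda>x. B x y"])
  show a: "B (x + x') y = B x y + B x' y" for x x' using assms by (simp add: bil2_def)
  from a[of 0 0] show "B 0 y = 0" by simp
qed

lemma bil2_sumR: fixes B :: "'x::ab_group_add \<Rightarrow> 'y::ab_group_add \<Rightarrow> 'm::ab_group_add" assumes "bil2 sx sy sm B"
  shows "B x (\<Sum>(a, b)\<leftarrow>t. f a b) = (\<Sum>(a, b)\<leftarrow>t. B x (f a b))"
proof (rule sum_pair_hom[where g="\<lambda>y. B x y"])
  show a: "B x (y + y') = B x y + B x y'" for y y' using assms by (simp add: bil2_def)
  from a[of 0 0] show "B x 0 = 0" by simp
qed

context HS
begin

lemma CO: assumes m: "module sm" and F: "tril3 sh sh sh sm F"
  shows "(\<Sum>(a, b)\<leftarrow>Delta h. \<Sum>(a1, a2)\<leftarrow>Delta a. F a1 a2 b) = (\<Sum>(a, b)\<leftarrow>Delta h. \<Sum>(b1, b2)\<leftarrow>Delta b. F a b1 b2)"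
  using teq3_transfer[OF m F coass[of h]] by (simp add: sum_concat3 sum_concat3P)

lemma RCO: assumes m: "module sm" and F: "tril3 sh sh sa sm F"
  shows "(\<Sum>(x, b)\<leftarrow>rho a. \<Sum>(x1, x2)\<leftarrow>Delta x. F x1 x2 b) = (\<Sum>(x, b)\<leftarrow>rho a. \<Sum>(y, e)\<leftarrow>rho b. F x y e)"
  using teq3_transfer[OF m F R_coass[of a]] by (simp add: sum_concat3 sum_concat3P)

end

lemma sum_tmul2: "(\<Sum>(a, b)\<leftarrow>tmul2 t u. f a b) = (\<Sum>(x, y)\<leftarrow>t. \<Sum>(x', y')\<leftarrow>u. f (x * x') (y * y'))"
  unfolding tmul2_def by (induction t) (auto simp: map_concat o_def case_prod_beta')

context HS
begin

lemma GL2: assumes m: "module sm" and B: "bil2 sh sh sm B"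
  shows "(\<Sum>(d1, d2)\<leftarrow>Delta d. \<Sum>(u, v)\<leftarrow>Delta d1. B u (v * S d2)) = B d 1"
proof -
  have F: "tril3 sh sh sh sm (\<lambda>u v w. B u (v * S w))"
    using B unfolding tril3_def bil2_def by (simp add: lin_simps)
  have "(\<Sum>(d1, d2)\<leftarrow>Delta d. \<Sum>(u, v)\<leftarrow>Delta d1. B u (v * S d2))
      = (\<Sum>(a, b)\<leftarrow>Delta d. \<Sum>(b1, b2)\<leftarrow>Delta b. B a (b1 * S b2))"
    using CO[OF m F] by simp
  also have "\<dots> = (\<Sum>(a, b)\<leftarrow>Delta d. B a (sh (eps b) 1))"
    by (simp add: bil2_sumR[OF B, symmetric] antiR)
  also have "\<dots> = (\<Sum>(a, b)\<leftarrow>Delta d. B (sh (eps b) a) 1)"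
    using B by (simp add: bil2_def)
  also have "\<dots> = B d 1"
    by (simp add: bil2_sumL[OF B, symmetric] counitR)
  finally show ?thesis .
qed

lemma GL: assumes m: "module sm" and B: "bil2 sh sh sm B" and mu: "bil2 sh sh sh mu"
    and mue: "\<And>a. (\<Sum>(a1, a2)\<leftarrow>Delta a. mu a1 a2) = sh (eps a) 1"
  shows "(\<Sum>(d1, d2)\<leftarrow>Delta d. \<Sum>(x, y)\<leftarrow>Delta d2. B (c * mu d1 x) y) = B c d"
proof -
  have F: "tril3 sh sh sh sm (\<lambda>a1 a2 b. B (c * mu a1 a2) b)"
    using B mu unfolding tril3_def bil2_def by (simp add: lin_simps)
  have "(\<Sum>(d1, d2)\<leftarrow>Delta d. \<Sum>(x, y)\<leftarrow>Delta d2. B (c * mu d1 x) y)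
      = (\<Sum>(a, b)\<leftarrow>Delta d. \<Sum>(a1, a2)\<leftarrow>Delta a. B (c * mu a1 a2) b)"
    using CO[OF m F] by simp
  also have "\<dots> = (\<Sum>(a, b)\<leftarrow>Delta d. B (c * sh (eps a) 1) b)"
    by (simp add: bil2_sumL[OF B, symmetric] sum_pair_multL[symmetric] mue)
  also have "\<dots> = (\<Sum>(a, b)\<leftarrow>Delta d. B c (sh (eps a) b))"
    using B by (simp add: bil2_def shm2)
  also have "\<dots> = B c d"
    by (simp add: bil2_sumR[OF B, symmetric] counitL)
  finally show ?thesis .
qed

lemma S_sum_pair: "S (\<Sum>(a, b)\<leftarrow>t. f a b) = (\<Sum>(a, b)\<leftarrow>t. S (f a b))"
  by (rule sum_pair_hom) (auto simp: S_add)
lemma phi_sum_pair: "phi (\<Sum>(a, b)\<leftarrow>t. f a b) = (\<Sum>(a, b)\<leftarrow>t. phi (f a b))"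
  by (rule sum_pair_hom) (auto simp: phi_add)
lemma eps_sum_pair: "eps (\<Sum>(a, b)\<leftarrow>t. f a b) = (\<Sum>(a, b)\<leftarrow>t. eps (f a b))"
  by (rule sum_pair_hom) (auto simp: eps_add)
lemma sh_sum_pair: "sh c (\<Sum>(a, b)\<leftarrow>t. f a b) = (\<Sum>(a, b)\<leftarrow>t. sh c (f a b))"
  by (rule sum_pair_hom) (auto simp: module.scale_right_distrib[OF mH] module.scale_zero_right[OF mH])
lemma sa_sum_pair: "sa c (\<Sum>(a, b)\<leftarrow>t. f a b) = (\<Sum>(a, b)\<leftarrow>t. sa c (f a b))"
  by (rule sum_pair_hom) (auto simp: module.scale_right_distrib[OF mA] module.scale_zero_right[OF mA])

lemma S_antimult: "S (x * y) = S y * S x"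
proof -
  have b1: "bil2 sh sh sh (\<lambda>u v. S (u * y) * v)"
    unfolding bil2_def by (simp add: lin_simps)
  have A: "S (x * y) = (\<Sum>(x1, x2)\<leftarrow>Delta x. \<Sum>(u, v)\<leftarrow>Delta x1. S (u * y) * v * S x2)"
    using GL2[OF mH b1, of x] by (simp add: mult.assoc)
  have B: "S (u * y) * v = (\<Sum>(y1, y2)\<leftarrow>Delta y. \<Sum>(p, q)\<leftarrow>Delta y1. S (u * p) * v * q * S y2)" for u v
  proof -
    have b2: "bil2 sh sh sh (\<lambda>p q. S (u * p) * (v * q))"
      unfolding bil2_def by (simp add: lin_simps)
    show ?thesis using GL2[OF mH b2, of y] by (simp add: mult.assoc)
  qed
  have E0: "(\<Sum>(u, v)\<leftarrow>Delta x1. (\<Sum>(y1, y2)\<leftarrow>Delta y. \<Sum>(p, q)\<leftarrow>Delta y1. S (u * p) * v * q * S y2) * S x2)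
     = (\<Sum>(y1, y2)\<leftarrow>Delta y. (\<Sum>(u, v)\<leftarrow>Delta x1. \<Sum>(p, q)\<leftarrow>Delta y1. S (u * p) * (v * q)) * S y2) * S x2" for x1 x2
    by (simp only: sum_pair_multR mult.assoc) (rule sum_pair_swap)
  have E: "(\<Sum>(u, v)\<leftarrow>Delta x1. \<Sum>(p, q)\<leftarrow>Delta y1. S (u * p) * (v * q)) = sh (eps x1) (sh (eps y1) 1)" for x1 y1
  proof -
    have b3: "bil2 sh sh sh (\<lambda>w1 w2. S w1 * w2)"
      unfolding bil2_def by (simp add: lin_simps)
    have "(\<Sum>(w1, w2)\<leftarrow>Delta (x1 * y1). S w1 * w2) = (\<Sum>(a, b)\<leftarrow>tmul2 (Delta x1) (Delta y1). S a * b)"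
      using teq2_transfer[OF mH b3 D_mult[of x1 y1]] by simp
    then show ?thesis
      by (simp add: sum_tmul2 antiL eps_mult module.scale_scale[OF mH])
  qed
  have F: "(\<Sum>(y1, y2)\<leftarrow>Delta y. sh (eps x1) (sh (eps y1) 1) * S y2) = sh (eps x1) (S y)" for x1
  proof -
    have "S y = (\<Sum>(y1, y2)\<leftarrow>Delta y. sh (eps y1) (S y2))"
      using arg_cong[OF counitL[of y], of S] by (simp add: S_sum_pair S_sc)
    then show ?thesis by (simp add: sh_sum_pair shm1)
  qed
  have G: "(\<Sum>(x1, x2)\<leftarrow>Delta x. sh (eps x1) (S y * S x2)) = S y * S x"
  proof -
    have "S x = (\<Sum>(x1, x2)\<leftarrow>Delta x. sh (eps x1) (S x2))"
      using arg_cong[OF counitL[of x], of S] by (simp add: S_sum_pair S_sc)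
    then show ?thesis by (simp add: sum_pair_multL shm2)
  qed
  have "S (x * y) = (\<Sum>(x1, x2)\<leftarrow>Delta x. \<Sum>(u, v)\<leftarrow>Delta x1.
           (\<Sum>(y1, y2)\<leftarrow>Delta y. \<Sum>(p, q)\<leftarrow>Delta y1. S (u * p) * v * q * S y2) * S x2)"
    unfolding A B ..
  also have "\<dots> = (\<Sum>(x1, x2)\<leftarrow>Delta x. (\<Sum>(y1, y2)\<leftarrow>Delta y. sh (eps x1) (sh (eps y1) 1) * S y2) * S x2)"
    by (simp only: E0 E)
  also have "\<dots> = (\<Sum>(x1, x2)\<leftarrow>Delta x. sh (eps x1) (S y * S x2))"
    by (simp only: F) (simp add: shm1)
  also have "\<dots> = S y * S x" by (rule G)
  finally show ?thesis .
qed

end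

lemma sum_map_pair: "(\<Sum>(a, b)\<leftarrow>map (\<lambda>(x, y). (F x y, G x y)) t. f a b) = (\<Sum>(x, y)\<leftarrow>t. f (F x y) (G x y))"
  by (induction t) auto

lemma sum_comp_pair: "sum_list (map ((\<lambda>(a, b). f a b) \<circ> (\<lambda>(x, y). (F x y, G x y))) t) = (\<Sum>(x, y)\<leftarrow>t. f (F x y) (G x y))"
  by (induction t) auto

lemma ev_tmul2: "ev sa \<phi> (tmul2 t u) = (\<Sum>(x, y)\<leftarrow>t. \<Sum>(x', y')\<leftarrow>u. sa (\<phi> (x * x')) (y * y'))"
  unfolding ev_def by (rule sum_tmul2)

context HS
begin

lemma colinT: assumes m: "module sm" and b: "bil2 sh sa sm f"
  shows "(\<Sum>(x, b)\<leftarrow>rho (phi h). f x b) = (\<Sum>(x, y)\<leftarrow>Delta h. f x (phi y))"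
  using teq2_transfer[OF m b colin[of h]] by (simp add: sum_map_pair sum_comp_pair)

lemma DmT: assumes m: "module sm" and b: "bil2 sh sh sm f"
  shows "(\<Sum>(a, b)\<leftarrow>Delta (x * y). f a b) = (\<Sum>(x1, x2)\<leftarrow>Delta x. \<Sum>(y1, y2)\<leftarrow>Delta y. f (x1 * y1) (x2 * y2))"
  using teq2_transfer[OF m b D_mult[of x y]] by (simp add: sum_tmul2)

definition "cent \<longleftrightarrow> (\<forall>h t. teq2 sh sa (tmul2 (rho (phi h)) t) (tmul2 t (rho (phi h))))"
definition "Acomm \<longleftrightarrow> (\<forall>h a. phi h * a = a * phi h)"
definition "Hcomm \<longleftrightarrow> (\<forall>\<phi> h l. module_hom sh (*) \<phi> \<longrightarrow>
    (\<Sum>(x, y)\<leftarrow>Delta h. sa (\<phi> (x * l)) (phi y)) = (\<Sum>(x, y)\<leftarrow>Delta h. sa (\<phi> (l * x)) (phi y)))"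

lemma hom_simps:
  assumes "module_hom sh (*) \<phi>"
  shows "\<phi> (x + y) = \<phi> x + \<phi> y" "\<phi> (sh c x) = c * \<phi> x"
  using assms by (simp_all add: module_hom.add module_hom.scale)

lemma bil_phi: assumes h: "module_hom sh (*) \<phi>"
  shows "bil2 sh sa sa (\<lambda>x b. sa (\<phi> (x * l)) (b * a))" "bil2 sh sa sa (\<lambda>x b. sa (\<phi> (l * x)) (a * b))"
  using h unfolding bil2_def
  by (simp_all add: lin_simps hom_simps module.scale_left_commute[OF mA])

lemma cent_Acomm: assumes "cent" shows "Acomm"
  unfolding Acomm_def
proof (intro allI)
  fix h a
  have "teq2 sh sa (tmul2 (rho (phi h)) [(1, a)]) (tmul2 [(1, a)] (rho (phi h)))"
    using assms unfolding cent_def by blast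
  from ev_teq[OF this eps_hom]
  have "(\<Sum>(x, b)\<leftarrow>rho (phi h). sa (eps x) (b * a)) = (\<Sum>(x, b)\<leftarrow>rho (phi h). sa (eps x) (a * b))"
    by (simp add: ev_tmul2)
  moreover have "phi h * a = (\<Sum>(x, b)\<leftarrow>rho (phi h). sa (eps x) b) * a"
    by (simp only: R_counit)
  moreover have "(\<Sum>(x, b)\<leftarrow>rho (phi h). sa (eps x) b) * a = (\<Sum>(x, b)\<leftarrow>rho (phi h). sa (eps x) (b * a))"
    by (simp add: sum_pair_multR sam1)
  moreover have "a * phi h = a * (\<Sum>(x, b)\<leftarrow>rho (phi h). sa (eps x) b)"
    by (simp only: R_counit)
  moreover have "a * (\<Sum>(x, b)\<leftarrow>rho (phi h). sa (eps x) b) = (\<Sum>(x, b)\<leftarrow>rho (phi h). sa (eps x) (a * b))"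
    by (simp add: sum_pair_multL sam2)
  ultimately show "phi h * a = a * phi h" by simp
qed

lemma cent_Hcomm: assumes "cent" shows "Hcomm"
  unfolding Hcomm_def
proof (intro allI impI)
  fix \<phi> h l assume hom: "module_hom sh (*) \<phi>"
  have "teq2 sh sa (tmul2 (rho (phi h)) [(l, 1)]) (tmul2 [(l, 1)] (rho (phi h)))"
    using assms unfolding cent_def by blast
  from ev_teq[OF this hom]
  have "(\<Sum>(x, b)\<leftarrow>rho (phi h). sa (\<phi> (x * l)) (b * 1)) = (\<Sum>(x, b)\<leftarrow>rho (phi h). sa (\<phi> (l * x)) (1 * b))"
    by (simp add: ev_tmul2)
  then show "(\<Sum>(x, y)\<leftarrow>Delta h. sa (\<phi> (x * l)) (phi y)) = (\<Sum>(x, y)\<leftarrow>Delta h. sa (\<phi> (l * x)) (phi y))"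
    using colinT[OF mA bil_phi(1)[OF hom, of l 1]] colinT[OF mA bil_phi(2)[OF hom, of l 1]] by simp
qed

lemma cent_of: assumes A: "Acomm" and H: "Hcomm" shows "cent"
  unfolding cent_def
proof (intro allI)
  fix h t
  show "teq2 sh sa (tmul2 (rho (phi h)) t) (tmul2 t (rho (phi h)))"
    unfolding teq_iff
  proof (intro allI impI)
    fix \<phi> assume hom: "module_hom sh (*) \<phi>"
    have "ev sa \<phi> (tmul2 (rho (phi h)) t) = (\<Sum>(l, a)\<leftarrow>t. \<Sum>(x, b)\<leftarrow>rho (phi h). sa (\<phi> (x * l)) (b * a))"
      by (simp add: ev_tmul2 sum_pair_swap[where xs="rho (phi h)"])
    also have "\<dots> = (\<Sum>(l, a)\<leftarrow>t. (\<Sum>(x, y)\<leftarrow>Delta h. sa (\<phi> (x * l)) (phi y)) * a)"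
      by (simp add: colinT[OF mA bil_phi(1)[OF hom]] sum_pair_multR sam1)
    also have "\<dots> = (\<Sum>(l, a)\<leftarrow>t. (\<Sum>(x, y)\<leftarrow>Delta h. sa (\<phi> (l * x)) (phi y)) * a)"
      using H hom unfolding Hcomm_def by simp
    also have "\<dots> = (\<Sum>(l, a)\<leftarrow>t. \<Sum>(x, b)\<leftarrow>rho (phi h). sa (\<phi> (l * x)) (a * b))"
      using A unfolding Acomm_def
      by (simp add: colinT[OF mA bil_phi(2)[OF hom]] sum_pair_multR sam1 sam2)
    also have "\<dots> = ev sa \<phi> (tmul2 t (rho (phi h)))"
      by (simp add: ev_tmul2)
    finally show "ev sa \<phi> (tmul2 (rho (phi h)) t) = ev sa \<phi> (tmul2 t (rho (phi h)))" .
  qed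
qed

lemma cent_iff: "cent \<longleftrightarrow> Acomm \<and> Hcomm"
  using cent_Acomm cent_Hcomm cent_of by blast

end

context HS
begin

lemma first3:
  "(\<forall>c. module_hom sh sa (\<lambda>l. phi (c * S l))) \<and>
   (\<forall>c c' d. phi ((c + c') * S d) = phi (c * S d) + phi (c' * S d)) \<and>
   (\<forall>r c d. phi (sh r c * S d) = sa r (phi (c * S d)))"
  using mH mA unfolding module_hom_def module_hom_axioms_def by (simp add: lin_simps)

lemma Ival: "sum_list (concat (map (\<lambda>(x, b). map (\<lambda>(y, e). e * phi (c * x * S (d * y))) (rho b)) (rho a)))
   = a * phi (c * S d)"
proof -
  have F: "tril3 sh sh sa sa (\<lambda>x y e. e * phi (c * x * S (d * y)))"
    unfolding tril3_def by (simp add: lin_simps)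
  have inner: "(\<Sum>(x1, x2)\<leftarrow>Delta x. b * phi (c * x1 * S (d * x2))) = sa (eps x) b * phi (c * S d)" for x b
  proof -
    have "(\<Sum>(x1, x2)\<leftarrow>Delta x. b * phi (c * x1 * S (d * x2))) = b * phi (c * (\<Sum>(x1, x2)\<leftarrow>Delta x. x1 * S x2) * S d)"
      by (simp add: S_antimult sum_pair_multL sum_pair_multR phi_sum_pair mult.assoc)
    also have "\<dots> = sa (eps x) b * phi (c * S d)"
      by (simp add: antiR shm1 shm2 phi_sc sam1 sam2)
    finally show ?thesis .
  qed
  have "sum_list (concat (map (\<lambda>(x, b). map (\<lambda>(y, e). e * phi (c * x * S (d * y))) (rho b)) (rho a)))
      = (\<Sum>(x, b)\<leftarrow>rho a. \<Sum>(y, e)\<leftarrow>rho b. e * phi (c * x * S (d * y)))"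
    by (simp add: sum_list_concat_split)
  also have "\<dots> = (\<Sum>(x, b)\<leftarrow>rho a. \<Sum>(x1, x2)\<leftarrow>Delta x. b * phi (c * x1 * S (d * x2)))"
    using RCO[OF mA F, of a] by simp
  also have "\<dots> = (\<Sum>(x, b)\<leftarrow>rho a. sa (eps x) b * phi (c * S d))"
    by (simp only: inner)
  also have "\<dots> = (\<Sum>(x, b)\<leftarrow>rho a. sa (eps x) b) * phi (c * S d)"
    by (simp only: sum_pair_multR)
  also have "\<dots> = a * phi (c * S d)"
    by (simp only: R_counit)
  finally show ?thesis .
qed

lemma I_iff: "(\<forall>a c d. sum_list (concat (map (\<lambda>(x, b). map (\<lambda>(y, e). e * phi (c * x * S (d * y))) (rho b)) (rho a)))
   = phi (c * S d) * a) \<longleftrightarrow> Acomm"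
proof
  assume H: "\<forall>a c d. sum_list (concat (map (\<lambda>(x, b). map (\<lambda>(y, e). e * phi (c * x * S (d * y))) (rho b)) (rho a)))
   = phi (c * S d) * a"
  show Acomm unfolding Acomm_def
  proof (intro allI)
    fix h a
    have "a * phi (h * S 1) = phi (h * S 1) * a"
      using H[THEN spec[of _ a], THEN spec[of _ h], THEN spec[of _ 1]] by (simp only: Ival)
    then show "phi h * a = a * phi h"
      by (simp add: S_one)
  qed
next
  assume "Acomm"
  then show "\<forall>a c d. sum_list (concat (map (\<lambda>(x, b). map (\<lambda>(y, e). e * phi (c * x * S (d * y))) (rho b)) (rho a)))
   = phi (c * S d) * a"
    unfolding Acomm_def by (simp add: Ival)
qed

end

context HS
begin

definition "Lf \<phi> c d = (\<Sum>(c1, c2)\<leftarrow>Delta c. sa (\<phi> c1) (phi (c2 * S d)))"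
definition "Rf \<phi> c d = (\<Sum>(d1, d2)\<leftarrow>Delta d. \<Sum>(y, e)\<leftarrow>rho (phi (c * S d1)). sa (\<phi> (d2 * y)) e)"
definition "TL \<phi> h p = (\<Sum>(x, y)\<leftarrow>Delta h. sa (\<phi> (x * p)) (phi y))"
definition "TR \<phi> h p = (\<Sum>(x, y)\<leftarrow>Delta h. sa (\<phi> (p * x)) (phi y))"

lemma phiH_sum_pair: assumes "module_hom sh (*) \<phi>"
  shows "\<phi> (\<Sum>(a, b)\<leftarrow>t. f a b) = (\<Sum>(a, b)\<leftarrow>t. \<phi> (f a b))"
  by (rule sum_pair_hom) (use assms in \<open>auto simp: module_hom.add module_hom.zero\<close>)

lemma sa_sum_left: "sa (\<Sum>(a, b)\<leftarrow>t. f a b) v = (\<Sum>(a, b)\<leftarrow>t. sa (f a b) v)"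
  by (rule sum_pair_hom[where g="\<lambda>c. sa c v"]) (auto simp: module.scale_left_distrib[OF mA] module.scale_zero_left[OF mA])

lemma bilTR: assumes h: "module_hom sh (*) \<phi>" shows "bil2 sh sh sa (TR \<phi>)"
proof -
  have b: "bil2 sh sh sa (\<lambda>x y. sa (\<phi> (p * x)) (phi y))" for p
    using h unfolding bil2_def by (simp add: lin_simps hom_simps[OF h] module.scale_left_commute[OF mA])
  show ?thesis
    unfolding bil2_def TR_def
    by (simp add: sumD_add[OF mA b] sumD_sc[OF mA b] lin_simps hom_simps[OF h] sum_pair_add sa_sum_pair)
qed

lemma bilLf: assumes h: "module_hom sh (*) \<phi>" shows "bil2 sh sh sa (Lf \<phi>)"
proof -
  have b: "bil2 sh sh sa (\<lambda>c1 c2. sa (\<phi> c1) (phi (c2 * S d)))" for d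
    using h unfolding bil2_def by (simp add: lin_simps hom_simps[OF h] module.scale_left_commute[OF mA])
  show ?thesis
    unfolding bil2_def Lf_def
    by (simp add: sumD_add[OF mA b] sumD_sc[OF mA b] lin_simps hom_simps[OF h] sum_pair_add sa_sum_pair
        module.scale_left_commute[OF mA])
qed

lemma R1: assumes h: "module_hom sh (*) \<phi>"
  shows "Rf \<phi> c d = (\<Sum>(d1, d2)\<leftarrow>Delta d. TR \<phi> (c * S d1) d2)"
proof -
  have b: "bil2 sh sa sa (\<lambda>y e. sa (\<phi> (l * y)) e)" for l
    using h unfolding bil2_def by (simp add: lin_simps hom_simps[OF h] module.scale_left_commute[OF mA])
  show ?thesis unfolding Rf_def TR_def by (simp add: colinT[OF mA b])
qed

lemma L1: assumes h: "module_hom sh (*) \<phi>"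
  shows "(\<Sum>(p1, p2)\<leftarrow>Delta p. Lf \<phi> (k * p1) p2) = TL \<phi> k p"
proof -
  have b: "bil2 sh sh sa (\<lambda>c1 c2. sa (\<phi> c1) (phi (c2 * S d)))" for d
    using h unfolding bil2_def by (simp add: lin_simps hom_simps[OF h] module.scale_left_commute[OF mA])
  have F: "tril3 sh sh sh sa (\<lambda>a1 a2 b. sa (\<phi> (x * a1)) (phi (y * a2 * S b)))" for x y
    using h unfolding tril3_def by (simp add: lin_simps hom_simps[OF h] module.scale_left_commute[OF mA])
  have s4: "(\<Sum>(b1, b2)\<leftarrow>Delta b. sa (\<phi> (x * a)) (phi (y * b1 * S b2))) = sa (eps b) (sa (\<phi> (x * a)) (phi y))" for x y a b
  proof -
    have "(\<Sum>(b1, b2)\<leftarrow>Delta b. sa (\<phi> (x * a)) (phi (y * b1 * S b2))) = sa (\<phi> (x * a)) (phi (y * (\<Sum>(b1, b2)\<leftarrow>Delta b. b1 * S b2)))"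
      by (simp add: sum_pair_multL phi_sum_pair sa_sum_pair mult.assoc)
    also have "\<dots> = sa (eps b) (sa (\<phi> (x * a)) (phi y))"
      by (simp add: antiR shm2 phi_sc module.scale_left_commute[OF mA])
    finally show ?thesis .
  qed
  have s5: "(\<Sum>(a, b)\<leftarrow>Delta p. sa (eps b) (sa (\<phi> (x * a)) (phi y))) = sa (\<phi> (x * p)) (phi y)" for x y
  proof -
    have "sa (\<phi> (x * p)) (phi y) = sa (\<phi> (x * (\<Sum>(a, b)\<leftarrow>Delta p. sh (eps b) a))) (phi y)"
      by (simp only: counitR)
    also have "\<dots> = (\<Sum>(a, b)\<leftarrow>Delta p. sa (eps b) (sa (\<phi> (x * a)) (phi y)))"
      by (simp add: sum_pair_multL phiH_sum_pair[OF h] sa_sum_left shm2 hom_simps[OF h] module.scale_scale[OF mA, symmetric])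
    finally show ?thesis by simp
  qed
  have "(\<Sum>(p1, p2)\<leftarrow>Delta p. Lf \<phi> (k * p1) p2)
      = (\<Sum>(p1, p2)\<leftarrow>Delta p. \<Sum>(x, y)\<leftarrow>Delta k. \<Sum>(x', y')\<leftarrow>Delta p1. sa (\<phi> (x * x')) (phi (y * y' * S p2)))"
    unfolding Lf_def by (simp add: DmT[OF mA b])
  also have "\<dots> = (\<Sum>(x, y)\<leftarrow>Delta k. \<Sum>(p1, p2)\<leftarrow>Delta p. \<Sum>(x', y')\<leftarrow>Delta p1. sa (\<phi> (x * x')) (phi (y * y' * S p2)))"
    by (rule sum_pair_swap)
  also have "\<dots> = (\<Sum>(x, y)\<leftarrow>Delta k. \<Sum>(a, b)\<leftarrow>Delta p. \<Sum>(b1, b2)\<leftarrow>Delta b. sa (\<phi> (x * a)) (phi (y * b1 * S b2)))"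
    using CO[OF mA F] by simp
  also have "\<dots> = (\<Sum>(x, y)\<leftarrow>Delta k. sa (\<phi> (x * p)) (phi y))"
    by (simp only: s4 s5)
  finally show ?thesis unfolding TL_def .
qed

lemma R2: assumes h: "module_hom sh (*) \<phi>"
  shows "(\<Sum>(p1, p2)\<leftarrow>Delta p. Rf \<phi> (k * p1) p2) = TR \<phi> k p"
proof -
  have mu: "bil2 sh sh sh (\<lambda>a b. a * S b)" unfolding bil2_def by (simp add: lin_simps)
  show ?thesis
    using GL[OF mA bilTR[OF h] mu, of k p] antiR
    by (simp add: R1[OF h] mult.assoc)
qed

lemma LGL: assumes h: "module_hom sh (*) \<phi>"
  shows "Lf \<phi> c d = (\<Sum>(d1, d2)\<leftarrow>Delta d. TL \<phi> (c * S d1) d2)"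
proof -
  have mu: "bil2 sh sh sh (\<lambda>a b. S a * b)" unfolding bil2_def by (simp add: lin_simps)
  have "(\<Sum>(d1, d2)\<leftarrow>Delta d. \<Sum>(x, y)\<leftarrow>Delta d2. Lf \<phi> (c * (S d1 * x)) y) = Lf \<phi> c d"
    using GL[OF mA bilLf[OF h] mu, of c d] antiL by simp
  then show ?thesis
    by (simp add: L1[OF h, symmetric] mult.assoc)
qed

end

context HS
begin

lemma J_iff: "(\<forall>c d. teq2 sh sa (map (\<lambda>(c1, c2). (c1, phi (c2 * S d))) (Delta c))
     (concat (map (\<lambda>(d1, d2). map (\<lambda>(y, e). (d2 * y, e)) (rho (phi (c * S d1)))) (Delta d)))) \<longleftrightarrow> Hcomm"
proof -
  have "(\<forall>c d. teq2 sh sa (map (\<lambda>(c1, c2). (c1, phi (c2 * S d))) (Delta c))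
     (concat (map (\<lambda>(d1, d2). map (\<lambda>(y, e). (d2 * y, e)) (rho (phi (c * S d1)))) (Delta d))))
     \<longleftrightarrow> (\<forall>c d \<phi>. module_hom sh (*) \<phi> \<longrightarrow> Lf \<phi> c d = Rf \<phi> c d)"
    by (simp add: teq_iff ev_map ev_concat Lf_def Rf_def)
  also have "\<dots> \<longleftrightarrow> Hcomm"
  proof
    assume J: "\<forall>c d \<phi>. module_hom sh (*) \<phi> \<longrightarrow> Lf \<phi> c d = Rf \<phi> c d"
    show Hcomm unfolding Hcomm_def
    proof (intro allI impI)
      fix \<phi> h l assume h: "module_hom sh (*) \<phi>"
      have "TL \<phi> h l = (\<Sum>(p1, p2)\<leftarrow>Delta l. Lf \<phi> (h * p1) p2)" by (rule L1[OF h, symmetric])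
      also have "\<dots> = (\<Sum>(p1, p2)\<leftarrow>Delta l. Rf \<phi> (h * p1) p2)" using J h by simp
      also have "\<dots> = TR \<phi> h l" by (rule R2[OF h])
      finally show "(\<Sum>(x, y)\<leftarrow>Delta h. sa (\<phi> (x * l)) (phi y)) = (\<Sum>(x, y)\<leftarrow>Delta h. sa (\<phi> (l * x)) (phi y))"
        unfolding TL_def TR_def .
    qed
  next
    assume H: Hcomm
    show "\<forall>c d \<phi>. module_hom sh (*) \<phi> \<longrightarrow> Lf \<phi> c d = Rf \<phi> c d"
    proof (intro allI impI)
      fix c d \<phi> assume h: "module_hom sh (*) \<phi>"
      have TT: "TL \<phi> x y = TR \<phi> x y" for x y using H h unfolding Hcomm_def TL_def TR_def by blast
      show "Lf \<phi> c d = Rf \<phi> c d"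
        by (simp add: LGL[OF h] R1[OF h] TT)
    qed
  qed
  finally show ?thesis .
qed

lemma main:
  "(A_integral sh Delta sa rho (\<lambda>h l. phi (h * S l)) \<longleftrightarrow>
            (\<forall>h t. teq2 sh sa (tmul2 (rho (phi h)) t) (tmul2 t (rho (phi h)))))
       \<and> (phi 1 = 1 \<longleftrightarrow>
            (\<forall>h. sum_list (map (\<lambda>(x, y). phi (x * S y)) (Delta h)) = sa (eps h) 1))"
proof
  have "A_integral sh Delta sa rho (\<lambda>h l. phi (h * S l)) \<longleftrightarrow> Acomm \<and> Hcomm"
    unfolding A_integral_def using first3 I_iff J_iff by simp
  then show "A_integral sh Delta sa rho (\<lambda>h l. phi (h * S l)) \<longleftrightarrow>
            (\<forall>h t. teq2 sh sa (tmul2 (rho (phi h)) t) (tmul2 t (rho (phi h))))"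
    using cent_iff unfolding cent_def by simp
next
  have V: "sum_list (map (\<lambda>(x, y). phi (x * S y)) (Delta h)) = sa (eps h) (phi 1)" for h
  proof -
    have "sum_list (map (\<lambda>(x, y). phi (x * S y)) (Delta h)) = phi (\<Sum>(x, y)\<leftarrow>Delta h. x * S y)"
      by (simp add: phi_sum_pair)
    also have "\<dots> = sa (eps h) (phi 1)" by (simp add: antiR phi_sc)
    finally show ?thesis .
  qed
  show "phi 1 = 1 \<longleftrightarrow> (\<forall>h. sum_list (map (\<lambda>(x, y). phi (x * S y)) (Delta h)) = sa (eps h) 1)"
  proof
    assume "phi 1 = 1" then show "\<forall>h. sum_list (map (\<lambda>(x, y). phi (x * S y)) (Delta h)) = sa (eps h) 1"
      using V by simp
  next
    assume "\<forall>h. sum_list (map (\<lambda>(x, y). phi (x * S y)) (Delta h)) = sa (eps h) 1"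
    then have "sa (eps 1) (phi 1) = sa (eps 1) 1" using V by metis
    then show "phi 1 = 1" by (simp add: eps_one module.scale_one[OF mA])
  qed
qed

end

theorem theorem3p1p2:
  fixes sh :: "'k::comm_ring_1 \<Rightarrow> 'h::ring_1 \<Rightarrow> 'h"
    and sa :: "'k \<Rightarrow> 'a::ring_1 \<Rightarrow> 'a"
    and Delta :: "'h \<Rightarrow> ('h \<times> 'h) list" and eps :: "'h \<Rightarrow> 'k" and S :: "'h \<Rightarrow> 'h"
    and rho :: "'a \<Rightarrow> ('h \<times> 'a) list" and phi :: "'h \<Rightarrow> 'a"
  assumes "hopf_algebra sh Delta eps S"
    and "projective_module sh"
    and "comodule_algebra sh Delta eps sa rho"
    and "colinear sh Delta sa rho phi"
  shows "(A_integral sh Delta sa rho (\<lambda>h l. phi (h * S l)) \<longleftrightarrow>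
            (\<forall>h t. teq2 sh sa (tmul2 (rho (phi h)) t) (tmul2 t (rho (phi h)))))
       \<and> (phi 1 = 1 \<longleftrightarrow>
            (\<forall>h. sum_list (map (\<lambda>(x, y). phi (x * S y)) (Delta h)) = sa (eps h) 1))"
proof -
  interpret HS sh sa Delta eps S rho phi
    using assms by unfold_locales
  show ?thesis by (rule main)
qed

end
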